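(* Let $G=(V,E)$ be a $D$-regular unweighted Ricci-flat graph with $D\ge2$, and assume $\mu(y)=\mu_0>0$ for all $y\in V$. Then $G$ satisfies CD$(F;0)$ with the CD-function $$F(a)=\frac{D}{\mu_0^2}\exp\Big(-\frac{\mu_0}{D}a\Big)\Big[\Upsilon\Big(\frac{2\mu_0}{D}a\Big)+(D-1)\,\Upsilon\Big(-\frac{2\mu_0}{D(D-1)}a\Big)\Big],\quad a\ge0;$$ that is, $F$ is a (strictly convex) CD-function, and for every $x\in V$ and every $v:V\to\mathbb R$ with $Lv(x)>0$ and $Lv(x)\ge Lv(y)$ for all $y\sim x$ one has $\Delta\Psi_{\Upsilon'}(v)(x)\ge F(Lv(x))$.
   Context: Unweighted means $w_{xy}=1$ for all edges; $D$-regular means every vertex has exactly $D$ neighbours. The Laplacian is $\Delta u(x)=\frac1{\mu(x)}\sum_{y\sim x}(u(y)-u(x))$, $L=-\Delta$, $\Psi_H(v)(x)=\frac1{\mu(x)}\sum_{y\sim x}H(v(y)-v(x))$, $\Upsilon(z)=e^z-1-z$, $\Upsilon'(z)=e^z-1$. A CD-function is a continuous $F:[0,\infty)\to[0,\infty)$ with $F(0)=0$, $F(x)/x$ strictly increasing on $(0,\infty)$, and $\int_1^\infty dr/F(r)<\infty$. A $D$-regular graph is Ricci-flat at $x$ if, with $N(x)=\{x\}\cup\{y:y\sim x\}$, there exist maps $\eta_1,\dots,\eta_D:N(x)\to V$ such that (i) $\eta_i(y)\sim y$ for all $i$ and $y\in N(x)$; (ii) $\eta_i(y)\ne\eta_j(y)$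 for $y\in N(x)$, $i\ne j$; (iii) for each $i$, the lists $(\eta_i(\eta_j(x)))_{j=1}^D$ and $(\eta_j(\eta_i(x)))_{j=1}^D$ coincide as multisets. $G$ is Ricci-flat if it is Ricci-flat at every vertex. *)

theory Defs
  imports "HOL-Analysis.Analysis" "HOL-Library.Multiset"
begin

text \<open>Graphs: vertex set = the type 'a, adjacency E (symmetric, irreflexive, unweighted).\<close>

definition nbrs :: "('a \<Rightarrow> 'a \<Rightarrow> bool) \<Rightarrow> 'a \<Rightarrow> 'a set" where
  "nbrs E x = {y. E x y}"

definition simple_graph :: "('a \<Rightarrow> 'a \<Rightarrow> bool) \<Rightarrow> bool" where
  "simple_graph E \<longleftrightarrow> (\<forall>x y. E x y \<longrightarrow> E y x) \<and> (\<forall>x. \<not> E x x)"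

definition regular :: "('a \<Rightarrow> 'a \<Rightarrow> bool) \<Rightarrow> nat \<Rightarrow> bool" where
  "regular E D \<longleftrightarrow> (\<forall>x. finite (nbrs E x) \<and> card (nbrs E x) = D)"

definition closed_nbhd :: "('a \<Rightarrow> 'a \<Rightarrow> bool) \<Rightarrow> 'a \<Rightarrow> 'a set" where
  "closed_nbhd E x = insert x (nbrs E x)"

text \<open>Ricci-flatness at x; the maps eta_1..eta_D are indexed by i < D.\<close>
definition ricci_flat_at :: "('a \<Rightarrow> 'a \<Rightarrow> bool) \<Rightarrow> nat \<Rightarrow> 'a \<Rightarrow> bool" where
  "ricci_flat_at E D x \<longleftrightarrow>
     (\<exists>eta :: nat \<Rightarrow> 'a \<Rightarrow> 'a.
        (\<forall>i<D. \<forall>y\<in>closed_nbhd E x. E y (eta i y)) \<and>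
        (\<forall>y\<in>closed_nbhd E x. \<forall>i<D. \<forall>j<D. i \<noteq> j \<longrightarrow> eta i y \<noteq> eta j y) \<and>
        (\<forall>i<D. image_mset (\<lambda>j. eta i (eta j x)) (mset_set {..<D})
                = image_mset (\<lambda>j. eta j (eta i x)) (mset_set {..<D})))"

definition ricci_flat :: "('a \<Rightarrow> 'a \<Rightarrow> bool) \<Rightarrow> nat \<Rightarrow> bool" where
  "ricci_flat E D \<longleftrightarrow> (\<forall>x. ricci_flat_at E D x)"

definition laplacian :: "('a \<Rightarrow> 'a \<Rightarrow> bool) \<Rightarrow> ('a \<Rightarrow> real) \<Rightarrow> ('a \<Rightarrow> real) \<Rightarrow> 'a \<Rightarrow> real" where
  "laplacian E \<mu> u x = (1 / \<mu> x) * (\<Sum>y\<in>nbrs E x. u y - u x)"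

definition Lop :: "('a \<Rightarrow> 'a \<Rightarrow> bool) \<Rightarrow> ('a \<Rightarrow> real) \<Rightarrow> ('a \<Rightarrow> real) \<Rightarrow> 'a \<Rightarrow> real" where
  "Lop E \<mu> u x = - laplacian E \<mu> u x"

definition Psi :: "('a \<Rightarrow> 'a \<Rightarrow> bool) \<Rightarrow> ('a \<Rightarrow> real) \<Rightarrow> (real \<Rightarrow> real) \<Rightarrow> ('a \<Rightarrow> real) \<Rightarrow> 'a \<Rightarrow> real" where
  "Psi E \<mu> H v x = (1 / \<mu> x) * (\<Sum>y\<in>nbrs E x. H (v y - v x))"

definition Upsilon :: "real \<Rightarrow> real" where
  "Upsilon z = exp z - 1 - z"

definition Upsilon' :: "real \<Rightarrow> real" where
  "Upsilon' z = exp z - 1"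

definition CD_function :: "(real \<Rightarrow> real) \<Rightarrow> bool" where
  "CD_function F \<longleftrightarrow>
     continuous_on {0..} F \<and> (\<forall>x\<ge>0. F x \<ge> 0) \<and> F 0 = 0 \<and>
     strict_mono_on {0<..} (\<lambda>x. F x / x) \<and>
     (\<lambda>r. 1 / F r) integrable_on {1..}"

definition strictly_convex_on :: "real set \<Rightarrow> (real \<Rightarrow> real) \<Rightarrow> bool" where
  "strictly_convex_on S f \<longleftrightarrow>
     (\<forall>x\<in>S. \<forall>y\<in>S. \<forall>t. x \<noteq> y \<and> 0 < t \<and> t < 1 \<longrightarrow>
        f ((1 - t) * x + t * y) < (1 - t) * f x + t * f y)"

definition CD_F0 :: "('a \<Rightarrow> 'a \<Rightarrow> bool) \<Rightarrow> ('a \<Rightarrow> real) \<Rightarrow> (real \<Rightarrow> real) \<Rightarrow> bool" where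
  "CD_F0 E \<mu> F \<longleftrightarrow> CD_function F \<and>
     (\<forall>x (v :: 'a \<Rightarrow> real). Lop E \<mu> v x > 0 \<and> (\<forall>y. E x y \<longrightarrow> Lop E \<mu> v x \<ge> Lop E \<mu> v y) \<longrightarrow>
        laplacian E \<mu> (Psi E \<mu> Upsilon' v) x \<ge> F (Lop E \<mu> v x))"

definition F_flat :: "nat \<Rightarrow> real \<Rightarrow> real \<Rightarrow> real" where
  "F_flat D \<mu>0 a = (real D / \<mu>0^2) * exp (- (\<mu>0 / real D) * a) *
     (Upsilon (2 * \<mu>0 / real D * a) + (real D - 1) * Upsilon (- (2 * \<mu>0 / (real D * (real D - 1))) * a))"

end

theory Submission
  imports Defs
begin


definition Rf :: "nat \<Rightarrow> real \<Rightarrow> real" where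
  "Rf D t = exp (-t) + (real D - 1) * exp (t / (real D - 1)) - real D"
definition Hf :: "nat \<Rightarrow> real \<Rightarrow> real \<Rightarrow> real" where
  "Hf D a b = exp (-b) + (real D - 1) * exp ((real D * a + b) / (real D - 1)) - real D * exp a"
definition Gm :: "nat \<Rightarrow> real \<Rightarrow> real" where
  "Gm D c = Hf D c c"

lemma Rf_nonneg:
  assumes "D \<ge> 2" shows "Rf D t \<ge> 0"
proof -
  have n: "real D - 1 > 0" using assms by simp
  have 1: "exp (-t) \<ge> 1 - t" using exp_ge_add_one_self[of "-t"] by simp
  have "exp (t / (real D - 1)) \<ge> 1 + t / (real D - 1)" by (rule exp_ge_add_one_self)
  then have "(real D - 1) * exp (t / (real D - 1)) \<ge> (real D - 1) * (1 + t / (real D - 1))"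
    using n by (intro mult_left_mono) auto
  also have "(real D - 1) * (1 + t / (real D - 1)) = real D - 1 + t" using n by (simp add: field_simps)
  finally show ?thesis using 1 unfolding Rf_def by linarith
qed

lemma Hf_eq:
  assumes "D \<ge> 2" shows "Hf D a b = exp a * Rf D (a + b)"
proof -
  have n: "real D - 1 > 0" using assms by simp
  have e1: "exp a * exp (-(a+b)) = exp (-b)" by (simp add: exp_add[symmetric])
  have "a + (a+b)/(real D - 1) = (real D * a + b)/(real D - 1)" using n by (simp add: field_simps)
  then have e2: "exp a * exp ((a+b)/(real D - 1)) = exp ((real D * a + b)/(real D - 1))"
    by (simp add: exp_add[symmetric])
  show ?thesis unfolding Hf_def Rf_def using e1 e2 by (simp add: algebra_simps)
qed

lemma Gm_eq: assumes "D \<ge> 2" shows "Gm D c = exp c * Rf D (2*c)"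
proof -
  have "c + c = 2 * c" by simp
  then show ?thesis unfolding Gm_def Hf_eq[OF assms] by metis
qed

lemma Gm_nonneg: assumes "D \<ge> 2" shows "Gm D c \<ge> 0"
  using Gm_eq[OF assms] Rf_nonneg[OF assms] by simp

lemma Gm_zero: assumes "D \<ge> 2" shows "Gm D 0 = 0"
  unfolding Gm_def Hf_def by simp

lemma pair_ineq:
  assumes "D \<ge> 2" shows "Hf D a b + Hf D b a \<ge> 2 * Gm D ((a+b)/2)"
proof -
  have amgm: "exp a + exp b \<ge> 2 * exp ((a+b)/2)"
  proof -
    have "0 \<le> (exp (a/2) - exp (b/2))^2" by simp
    also have "\<dots> = exp a + exp b - 2 * exp ((a+b)/2)"
      by (simp add: power2_eq_square algebra_simps exp_add[symmetric] add_divide_distrib)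
    finally show ?thesis by simp
  qed
  have "Hf D a b + Hf D b a = (exp a + exp b) * Rf D (a+b)"
    using Hf_eq[OF assms] by (simp add: algebra_simps)
  also have "\<dots> \<ge> 2 * exp ((a+b)/2) * Rf D (a+b)"
    using amgm Rf_nonneg[OF assms] by (intro mult_right_mono) auto
  moreover have "Gm D ((a+b)/2) = exp ((a+b)/2) * Rf D (a+b)"
  proof -
    have h2: "2 * ((a+b)/2) = a + b" by simp
    show ?thesis using Gm_eq[OF assms, of "(a+b)/2"] unfolding h2 .
  qed
  ultimately show ?thesis by simp
qed

definition kk :: "nat \<Rightarrow> real" where "kk D = (real D + 1) / (real D - 1)"
definition Gm1 :: "nat \<Rightarrow> real \<Rightarrow> real" where
  "Gm1 D c = - exp (-c) + (real D + 1) * exp (kk D * c) - real D * exp c"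
definition Gm2 :: "nat \<Rightarrow> real \<Rightarrow> real" where
  "Gm2 D c = exp (-c) + (real D + 1) * kk D * exp (kk D * c) - real D * exp c"

lemma kk_arg: assumes "D \<ge> 2" shows "(real D * c + c) / (real D - 1) = kk D * c"
  using assms by (simp add: kk_def field_simps)

lemma Gm_alt: assumes "D \<ge> 2"
  shows "Gm D = (\<lambda>c. exp (-c) + (real D - 1) * exp (kk D * c) - real D * exp c)"
  unfolding Gm_def Hf_def using kk_arg[OF assms] by auto

lemma Gm_deriv:
  assumes "D \<ge> 2" shows "(Gm D has_real_derivative Gm1 D c) (at c)"
proof -
  have n: "real D - 1 > 0" using assms by simp
  have "((\<lambda>c. exp (-c) + (real D - 1) * exp (kk D * c) - real D * exp c)
     has_real_derivative (exp (-c) * (-1) + (real D - 1) * (exp (kk D * c) * (kk D * 1)) - real D * exp c)) (at c)"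
    by (auto intro!: derivative_eq_intros simp: algebra_simps)
  moreover have "(exp (-c) * (-1) + (real D - 1) * (exp (kk D * c) * (kk D * 1)) - real D * exp c) = Gm1 D c"
    using n unfolding Gm1_def kk_def by (simp add: field_simps)
  ultimately show ?thesis using Gm_alt[OF assms] by simp
qed

lemma Gm1_deriv:
  assumes "D \<ge> 2" shows "(Gm1 D has_real_derivative Gm2 D c) (at c)"
proof -
  have "((\<lambda>c. - exp (-c) + (real D + 1) * exp (kk D * c) - real D * exp c)
     has_real_derivative (- (exp (-c) * (-1)) + (real D + 1) * (exp (kk D * c) * (kk D * 1)) - real D * exp c)) (at c)"
    by (auto intro!: derivative_eq_intros simp: algebra_simps)
  moreover have "Gm1 D = (\<lambda>c. - exp (-c) + (real D + 1) * exp (kk D * c) - real D * exp c)"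
    unfolding Gm1_def by auto
  ultimately show ?thesis unfolding Gm2_def by (simp add: algebra_simps)
qed

lemma kk_big: assumes "D \<ge> (2::nat)" shows "real D - 1 < (real D + 1) * kk D"
proof -
  have n: "real D - 1 \<ge> 1" using assms by simp
  have "(real D - 1) * (real D - 1) < (real D + 1) * (real D + 1)" using n by (intro mult_strict_mono) auto
  then show ?thesis using n by (simp add: kk_def field_simps)
qed

lemma aux_l2: assumes "n > (0::real)" "t = 1/p" "p = D / n" "D = n + 1"
  shows "D * ((1 - t) + t * E) = 1 + n * E"
  using assms by (simp add: field_simps)

lemma Gm2_pos:
  assumes "D \<ge> 2" shows "Gm2 D c > 0"
proof -
  define n where "n = real D - 1"
  have n: "n > 0" "n \<ge> 1" using assms by (auto simp: n_def)
  have Dn: "real D = n + 1" by (simp add: n_def)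
  define p where "p = real D / n"
  have p: "p \<ge> 1" using n Dn by (simp add: p_def)
  define t where "t = 1 / p"
  have t: "0 \<le> t" "t \<le> 1" using p by (auto simp: t_def)
  have tp: "t * p = 1" using p by (simp add: t_def)
  have le: "exp ((1 - t) *\<^sub>R 0 + t *\<^sub>R (p * (2*c))) \<le> (1 - t) * exp 0 + t * exp (p * (2*c))"
    using convex_onD[OF exp_convex t, of 0 "p * (2*c)"] by blast
  have eq: "(1 - t) *\<^sub>R 0 + t *\<^sub>R (p * (2*c)) = 2 * c"
    by (simp add: mult.assoc[symmetric] tp)
  have "exp (2*c) \<le> (1 - t) + t * exp (p * (2*c))" using le unfolding eq by simp
  then have "real D * exp (2*c) \<le> real D * ((1 - t) + t * exp (p * (2*c)))"
    by (intro mult_left_mono) auto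
  also have "real D * ((1 - t) + t * exp (p * (2*c))) = 1 + n * exp (p * (2*c))"
    by (rule aux_l2[OF n(1) t_def p_def Dn])
  finally have A: "real D * exp (2*c) \<le> 1 + n * exp (p * (2*c))" .
  have E1: "exp (-c) * exp (2*c) = exp c" by (simp add: exp_add[symmetric])
  have "p * (2*c) - c = (2 * real D / n - 1) * c" by (simp add: p_def algebra_simps)
  also have "2 * real D / n - 1 = kk D" using n Dn by (simp add: kk_def field_simps)
  finally have "p * (2*c) - c = kk D * c" .
  then have E2: "exp (-c) * exp (p * (2*c)) = exp (kk D * c)"
    by (simp add: exp_add[symmetric])
  have "real D * exp c = exp (-c) * (real D * exp (2*c))" using E1 by (simp add: algebra_simps)
  also have "\<dots> \<le> exp (-c) * (1 + n * exp (p * (2*c)))" using A by (intro mult_left_mono) auto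
  also have "\<dots> = exp (-c) + n * exp (kk D * c)" using E2 by (simp add: algebra_simps)
  finally have B: "real D * exp c \<le> exp (-c) + n * exp (kk D * c)" .
  have "n < (real D + 1) * kk D" using kk_big[OF assms] by (simp add: n_def)
  then have C: "n * exp (kk D * c) < (real D + 1) * kk D * exp (kk D * c)"
    by (intro mult_strict_right_mono) auto
  have G: "Gm2 D c = exp (-c) + (real D + 1) * kk D * exp (kk D * c) - real D * exp c"
    by (simp add: Gm2_def)
  show ?thesis unfolding G using B C by linarith
qed

lemma Gm1_strict_mono:
  assumes "D \<ge> 2" "x < y" shows "Gm1 D x < Gm1 D y"
  using assms(2) by (rule DERIV_pos_imp_increasing) (use Gm1_deriv[OF assms(1)] Gm2_pos[OF assms(1)] in blast)

lemma Gm_convex: assumes "D \<ge> 2" shows "convex_on UNIV (Gm D)"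
  by (rule convex_on_realI[where f'="Gm1 D"])
     (use Gm_deriv[OF assms] Gm1_strict_mono[OF assms] in \<open>auto simp: le_less\<close>)

lemma strict_conv_aux:
  fixes f f' :: "real \<Rightarrow> real" and x y t :: real
  assumes der: "\<And>x. (f has_real_derivative f' x) (at x)" and mono: "\<And>x y. x < y \<Longrightarrow> f' x < f' y"
    and xy: "x < y" and t: "0 < t" "t < 1"
  shows "f ((1 - t) * x + t * y) < (1 - t) * f x + t * f y"
proof -
  define z where "z = (1 - t) * x + t * y"
  have zx: "z - x = t * (y - x)" by (simp add: z_def algebra_simps)
  have yz: "y - z = (1 - t) * (y - x)" by (simp add: z_def algebra_simps)
  have "t * (y - x) > 0" using xy t by simp
  then have "x < z" using zx by simp
  have "(1 - t) * (y - x) > 0" using xy t by simp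
  then have "z < y" using yz by simp
  obtain a where a: "x < a" "a < z" "f z - f x = (z - x) * f' a"
    using MVT2[OF \<open>x < z\<close>, of f f'] der by blast
  obtain b where b: "z < b" "b < y" "f y - f z = (y - z) * f' b"
    using MVT2[OF \<open>z < y\<close>, of f f'] der by blast
  have ab: "f' a < f' b" using mono a b by simp
  have "(1 - t) * f x + t * f y - f z = (1 - t) * (f x - f z) + t * (f y - f z)" by (simp add: algebra_simps)
  also have "\<dots> = t * (1 - t) * (y - x) * (f' b - f' a)"
  proof -
    have A: "f x - f z = - ((t * (y - x)) * f' a)" using a(3) zx by simp
    have B: "f y - f z = ((1 - t) * (y - x)) * f' b" using b(3) yz by simp
    show ?thesis unfolding A B by (simp add: algebra_simps)
  qed
  also have "\<dots> > 0" using t xy ab by (intro mult_pos_pos) auto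
  finally show ?thesis unfolding z_def by simp
qed

lemma strict_conv_deriv:
  fixes f f' :: "real \<Rightarrow> real"
  assumes der: "\<And>x. (f has_real_derivative f' x) (at x)" and mono: "\<And>x y. x < y \<Longrightarrow> f' x < f' y"
  shows "strictly_convex_on S f"
  unfolding strictly_convex_on_def
proof (intro ballI allI impI)
  fix x y t :: real assume "x \<in> S" "y \<in> S" and h: "x \<noteq> y \<and> 0 < t \<and> t < 1"
  show "f ((1 - t) * x + t * y) < (1 - t) * f x + t * f y"
  proof (cases "x < y")
    case True then show ?thesis using strict_conv_aux[OF der mono True] h by blast
  next
    case False
    then have "y < x" using h by simp
    from strict_conv_aux[OF der mono this, of "1 - t"] h
    show ?thesis by (simp add: algebra_simps)
  qed
qed

lemma Gm_strict_convex: assumes "D \<ge> 2" shows "strictly_convex_on S (Gm D)"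
  by (rule strict_conv_deriv[OF Gm_deriv[OF assms] Gm1_strict_mono[OF assms]])

lemma strict_convex_affine:
  fixes g :: "real \<Rightarrow> real"
  assumes g: "strictly_convex_on UNIV g" and c: "c > 0" and k: "k \<noteq> 0"
  shows "strictly_convex_on S (\<lambda>a. c * g (k * a))"
  unfolding strictly_convex_on_def
proof (intro ballI allI impI)
  fix x y t :: real assume "x \<in> S" "y \<in> S" and h: "x \<noteq> y \<and> 0 < t \<and> t < 1"
  have "k * x \<noteq> k * y" using h k by simp
  then have "g ((1 - t) * (k * x) + t * (k * y)) < (1 - t) * g (k * x) + t * g (k * y)"
    using g h unfolding strictly_convex_on_def by blast
  moreover have "(1 - t) * (k * x) + t * (k * y) = k * ((1 - t) * x + t * y)" by (simp add: algebra_simps)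
  ultimately have "g (k * ((1 - t) * x + t * y)) < (1 - t) * g (k * x) + t * g (k * y)" by simp
  then have "c * g (k * ((1 - t) * x + t * y)) < c * ((1 - t) * g (k * x) + t * g (k * y))"
    using c by simp
  then show "c * g (k * ((1 - t) * x + t * y)) < (1 - t) * (c * g (k * x)) + t * (c * g (k * y))"
    by (simp add: algebra_simps)
qed

lemma Gm_combine:
  assumes "D \<ge> 2" "p > 0" "q \<ge> 0"
  shows "p * Gm D x + q * Gm D y \<ge> (p + q) * Gm D ((p * x + q * y) / (p + q))"
proof -
  define t where "t = q / (p + q)"
  have t: "0 \<le> t" "t \<le> 1" using assms by (auto simp: t_def)
  have "Gm D ((1 - t) *\<^sub>R x + t *\<^sub>R y) \<le> (1 - t) * Gm D x + t * Gm D y"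
    using convex_onD[OF Gm_convex[OF assms(1)] t, of x y] by blast
  moreover have t1: "1 - t = p / (p + q)" using assms by (simp add: t_def field_simps)
  moreover have "(1 - t) *\<^sub>R x + t *\<^sub>R y = (p * x + q * y) / (p + q)"
    unfolding t1 by (simp add: t_def add_divide_distrib)
  ultimately have "Gm D ((p * x + q * y) / (p + q)) \<le> p / (p + q) * Gm D x + q / (p + q) * Gm D y"
    by (simp add: t_def)
  then have "(p + q) * Gm D ((p * x + q * y) / (p + q)) \<le> (p + q) * (p / (p + q) * Gm D x + q / (p + q) * Gm D y)"
    using assms by (intro mult_left_mono) auto
  also have "\<dots> = p * Gm D x + q * Gm D y"
  proof -
    have ne: "p + q \<noteq> 0" using assms by simp
    have 1: "(p + q) * (p / (p + q) * Gm D x) = p * Gm D x" using ne by simp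
    have 2: "(p + q) * (q / (p + q) * Gm D y) = q * Gm D y" using ne by simp
    show ?thesis unfolding distrib_left[of "p+q"] 1 2 ..
  qed
  finally show ?thesis .
qed

lemma Hf_cross:
  assumes D2: "D \<ge> 2" and A: "a' \<le> A" and B: "b \<le> b'"
  shows "Hf D A b + Hf D a' b' \<le> Hf D A b' + Hf D a' b"
proof -
  define n where "n = real D - 1"
  have n: "n > 0" using D2 by (simp add: n_def)
  have split: "\<And>x y. exp ((real D * x + y) / n) = exp (real D * x / n) * exp (y / n)"
    by (simp add: exp_add[symmetric] add_divide_distrib)
  define X where "X = exp (real D * A / n)"
  define x0 where "x0 = exp (real D * a' / n)"
  define Y where "Y = exp (b' / n)"
  define y0 where "y0 = exp (b / n)"
  have "real D * a' / n \<le> real D * A / n" using A n by (intro divide_right_mono mult_left_mono) auto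
  then have Xx: "x0 \<le> X" by (simp add: X_def x0_def)
  have "b / n \<le> b' / n" using B n by (intro divide_right_mono) auto
  then have Yy: "y0 \<le> Y" by (simp add: Y_def y0_def)
  have prod: "0 \<le> (X - x0) * (Y - y0)" using Xx Yy by simp
  have "X * y0 + x0 * Y \<le> X * Y + x0 * y0" using prod by (simp add: algebra_simps)
  then have "n * (X * y0 + x0 * Y) \<le> n * (X * Y + x0 * y0)" using n by (intro mult_left_mono) auto
  then show ?thesis unfolding Hf_def n_def[symmetric] split X_def[symmetric] x0_def[symmetric] Y_def[symmetric] y0_def[symmetric]
    by (simp add: algebra_simps)
qed

definition tr :: "'a \<Rightarrow> 'a \<Rightarrow> 'a \<Rightarrow> 'a" where
  "tr a b i = (if i = a then b else if i = b then a else i)"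

lemma tr_bij: assumes "a \<in> I" "b \<in> I" shows "bij_betw (tr a b) I I"
  by (rule bij_betwI[where g="tr a b"]) (use assms in \<open>auto simp: tr_def\<close>)

lemma exchange:
  fixes w :: "'a \<Rightarrow> real"
  assumes D2: "D \<ge> 2" and fin: "finite I" and ak: "a \<in> I" "k \<in> I" "a \<noteq> k"
    and wa: "w k \<le> w a" and ws: "w (\<sigma> k) \<le> w (\<sigma> a)"
  shows "(\<Sum>i\<in>I. Hf D (w i) (w (\<sigma> (tr a k i)))) \<le> (\<Sum>i\<in>I. Hf D (w i) (w (\<sigma> i)))"
proof -
  have rm: "\<And>g::'a \<Rightarrow> real. sum g I = g a + (g k + sum g (I - {a} - {k}))"
  proof -
    fix g :: "'a \<Rightarrow> real"
    have "sum g I = g a + sum g (I - {a})" using sum.remove[OF fin ak(1)] .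
    also have "sum g (I - {a}) = g k + sum g (I - {a} - {k})"
      using sum.remove[of "I - {a}" k g] fin ak by auto
    finally show "sum g I = g a + (g k + sum g (I - {a} - {k}))" .
  qed
  have rest: "(\<Sum>i\<in>I - {a} - {k}. Hf D (w i) (w (\<sigma> (tr a k i)))) = (\<Sum>i\<in>I - {a} - {k}. Hf D (w i) (w (\<sigma> i)))"
    by (rule sum.cong) (auto simp: tr_def)
  have key: "Hf D (w a) (w (\<sigma> k)) + Hf D (w k) (w (\<sigma> a)) \<le> Hf D (w a) (w (\<sigma> a)) + Hf D (w k) (w (\<sigma> k))"
    using Hf_cross[OF D2 wa ws] by (simp add: algebra_simps)
  have ta: "tr a k a = k" and tk: "tr a k k = a" using ak by (auto simp: tr_def)
  show ?thesis unfolding rm[of "\<lambda>i. Hf D (w i) (w (\<sigma> (tr a k i)))"] rm[of "\<lambda>i. Hf D (w i) (w (\<sigma> i))"] rest ta tk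
    using key by simp
qed

lemma bij_betw_remove:
  assumes bij: "bij_betw f I I" and A: "A \<subseteq> I" and fA: "f ` A = A"
  shows "bij_betw f (I - A) (I - A)"
proof -
  have inj: "inj_on f I" using bij by (simp add: bij_betw_def)
  have "f ` (I - A) = f ` I - f ` A" using inj_on_image_set_diff[OF inj, of I A] A by auto
  also have "\<dots> = I - A" using bij fA by (simp add: bij_betw_def)
  finally show ?thesis using inj by (simp add: bij_betw_def inj_on_diff)
qed

lemma mean_mul:
  fixes w :: "'a \<Rightarrow> real"
  assumes "finite J" shows "real (card J) * (sum w J / real (card J)) = sum w J"
  using assms by (cases "card J = 0") auto

lemma rearr_step:
  fixes w :: "'a \<Rightarrow> real" and \<sigma> :: "'a \<Rightarrow> 'a"
  assumes D2: "D \<ge> 2" and fin: "finite I" and bij: "bij_betw \<sigma> I I" and ne: "I \<noteq> {}"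
    and IH: "\<And>J \<tau>. J \<subset> I \<Longrightarrow> bij_betw \<tau> J J \<Longrightarrow>
      real (card J) * Gm D (sum w J / real (card J)) \<le> (\<Sum>i\<in>J. Hf D (w i) (w (\<tau> i)))"
  shows "real (card I) * Gm D (sum w I / real (card I)) \<le> (\<Sum>i\<in>I. Hf D (w i) (w (\<sigma> i)))"
proof -
  have "Max (w ` I) \<in> w ` I" using fin ne by simp
  then obtain i0 where i0I: "i0 \<in> I" and i0M: "w i0 = Max (w ` I)" by auto
  have i0: "\<And>i. i \<in> I \<Longrightarrow> w i \<le> w i0" unfolding i0M using fin by simp
  have "Min (w ` I) \<in> w ` I" using fin ne by simp
  then obtain j0 where j0I: "j0 \<in> I" and j0M: "w j0 = Min (w ` I)" by auto
  have j0: "\<And>i. i \<in> I \<Longrightarrow> w j0 \<le> w i" unfolding j0M using fin by simp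
  have img: "\<And>\<tau>. bij_betw \<tau> I I \<Longrightarrow> \<tau> ` I = I" by (simp add: bij_betw_def)
  have "\<exists>\<sigma>1. bij_betw \<sigma>1 I I \<and> \<sigma>1 i0 = j0 \<and>
          (\<Sum>i\<in>I. Hf D (w i) (w (\<sigma>1 i))) \<le> (\<Sum>i\<in>I. Hf D (w i) (w (\<sigma> i)))"
  proof -
    have "j0 \<in> \<sigma> ` I" using img[OF bij] j0I by simp
    then obtain k where k: "k \<in> I" "\<sigma> k = j0" by auto
    show ?thesis
    proof (cases "k = i0")
      case True then show ?thesis using bij k by auto
    next
      case False
      have b1: "bij_betw (\<sigma> \<circ> tr i0 k) I I" using bij_betw_trans[OF tr_bij[OF i0I k(1)] bij] .
      have b2: "(\<sigma> \<circ> tr i0 k) i0 = j0" using k by (simp add: tr_def)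
      have "\<sigma> i0 \<in> I" using img[OF bij] i0I by auto
      then have ws: "w (\<sigma> k) \<le> w (\<sigma> i0)" using k j0 by simp
      have b3: "(\<Sum>i\<in>I. Hf D (w i) (w (\<sigma> (tr i0 k i)))) \<le> (\<Sum>i\<in>I. Hf D (w i) (w (\<sigma> i)))"
        using exchange[OF D2 fin i0I k(1) _ i0[OF k(1)] ws] False by auto
      show ?thesis using b1 b2 b3 by (intro exI[of _ "\<sigma> \<circ> tr i0 k"]) simp
    qed
  qed
  then obtain \<sigma>1 where s1: "bij_betw \<sigma>1 I I" "\<sigma>1 i0 = j0"
    and s1le: "(\<Sum>i\<in>I. Hf D (w i) (w (\<sigma>1 i))) \<le> (\<Sum>i\<in>I. Hf D (w i) (w (\<sigma> i)))" by blast
  show ?thesis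
  proof (cases "i0 = j0")
    case True
    define I' where "I' = I - {i0}"
    have sub: "I' \<subset> I" using i0I by (auto simp: I'_def)
    have bI': "bij_betw \<sigma>1 I' I'" unfolding I'_def
      by (rule bij_betw_remove[OF s1(1)]) (use i0I s1(2) True in auto)
    have finI': "finite I'" using fin by (simp add: I'_def)
    have cI: "real (card I) = 1 + real (card I')"
    proof -
      have "card I = Suc (card I')" unfolding I'_def using card_Suc_Diff1[OF fin i0I] by simp
      then show ?thesis by simp
    qed
    have sI: "sum w I = w i0 + sum w I'" using sum.remove[OF fin i0I] by (simp add: I'_def)
    have sH: "(\<Sum>i\<in>I. Hf D (w i) (w (\<sigma>1 i))) = Gm D (w i0) + (\<Sum>i\<in>I'. Hf D (w i) (w (\<sigma>1 i)))"
      using sum.remove[OF fin i0I, of "\<lambda>i. Hf D (w i) (w (\<sigma>1 i))"] s1(2) True by (simp add: I'_def Gm_def)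
    have "real (card I) * Gm D (sum w I / real (card I))
        = (1 + real (card I')) * Gm D ((1 * w i0 + real (card I') * (sum w I' / real (card I'))) / (1 + real (card I')))"
      unfolding cI[symmetric] mean_mul[OF finI'] sI by simp
    also have "\<dots> \<le> 1 * Gm D (w i0) + real (card I') * Gm D (sum w I' / real (card I'))"
      by (rule Gm_combine[OF D2]) auto
    also have "\<dots> \<le> Gm D (w i0) + (\<Sum>i\<in>I'. Hf D (w i) (w (\<sigma>1 i)))" using IH[OF sub bI'] by simp
    also have "\<dots> \<le> (\<Sum>i\<in>I. Hf D (w i) (w (\<sigma> i)))" using sH s1le by simp
    finally show ?thesis .
  next
    case False
    have "\<exists>\<sigma>2. bij_betw \<sigma>2 I I \<and> \<sigma>2 i0 = j0 \<and> \<sigma>2 j0 = i0 \<and>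
          (\<Sum>i\<in>I. Hf D (w i) (w (\<sigma>2 i))) \<le> (\<Sum>i\<in>I. Hf D (w i) (w (\<sigma>1 i)))"
    proof -
      have "i0 \<in> \<sigma>1 ` I" using img[OF s1(1)] i0I by simp
      then obtain k where k: "k \<in> I" "\<sigma>1 k = i0" by auto
      show ?thesis
      proof (cases "k = j0")
        case True then show ?thesis using s1 k by auto
      next
        case kne: False
        have ki0: "k \<noteq> i0" using k s1(2) False by auto
        have b1: "bij_betw (\<sigma>1 \<circ> tr k j0) I I" using bij_betw_trans[OF tr_bij[OF k(1) j0I] s1(1)] .
        have b2: "(\<sigma>1 \<circ> tr k j0) j0 = i0" using k by (simp add: tr_def)
        have b2': "(\<sigma>1 \<circ> tr k j0) i0 = j0" using ki0 False s1(2) by (simp add: tr_def)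
        have "\<sigma>1 j0 \<in> I" using img[OF s1(1)] j0I by auto
        then have ws: "w (\<sigma>1 j0) \<le> w (\<sigma>1 k)" using k i0 by simp
        have b3: "(\<Sum>i\<in>I. Hf D (w i) (w (\<sigma>1 (tr k j0 i)))) \<le> (\<Sum>i\<in>I. Hf D (w i) (w (\<sigma>1 i)))"
          using exchange[OF D2 fin k(1) j0I kne j0[OF k(1)] ws] by auto
        show ?thesis using b1 b2 b2' b3 by (intro exI[of _ "\<sigma>1 \<circ> tr k j0"]) simp
      qed
    qed
    then obtain \<sigma>2 where s2: "bij_betw \<sigma>2 I I" "\<sigma>2 i0 = j0" "\<sigma>2 j0 = i0"
      and s2le: "(\<Sum>i\<in>I. Hf D (w i) (w (\<sigma>2 i))) \<le> (\<Sum>i\<in>I. Hf D (w i) (w (\<sigma>1 i)))" by blast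
    define I' where "I' = I - {i0} - {j0}"
    have sub: "I' \<subset> I" using i0I by (auto simp: I'_def)
    have bI': "bij_betw \<sigma>2 I' I'" unfolding I'_def Diff_insert2[symmetric]
      by (rule bij_betw_remove[OF s2(1)]) (use i0I j0I s2(2,3) in auto)
    have finI': "finite I'" using fin by (simp add: I'_def)
    have j0I': "j0 \<in> I - {i0}" using j0I False by auto
    have cI: "real (card I) = 2 + real (card I')"
    proof -
      have "card I = Suc (card (I - {i0}))" using card_Suc_Diff1[OF fin i0I] by simp
      moreover have "card (I - {i0}) = Suc (card I')" unfolding I'_def
        using card_Suc_Diff1[of "I - {i0}" j0] fin j0I' by simp
      ultimately show ?thesis by simp
    qed
    have rm: "\<And>g::'a \<Rightarrow> real. sum g I = g i0 + (g j0 + sum g I')"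
    proof -
      fix g :: "'a \<Rightarrow> real"
      have "sum g I = g i0 + sum g (I - {i0})" using sum.remove[OF fin i0I] .
      also have "sum g (I - {i0}) = g j0 + sum g I'"
        using sum.remove[of "I - {i0}" j0 g] fin j0I' by (simp add: I'_def)
      finally show "sum g I = g i0 + (g j0 + sum g I')" .
    qed
    have sH: "(\<Sum>i\<in>I. Hf D (w i) (w (\<sigma>2 i))) = (Hf D (w i0) (w j0) + Hf D (w j0) (w i0)) + (\<Sum>i\<in>I'. Hf D (w i) (w (\<sigma>2 i)))"
      unfolding rm[of "\<lambda>i. Hf D (w i) (w (\<sigma>2 i))"] using s2 by simp
    have sI: "sum w I = 2 * ((w i0 + w j0) / 2) + sum w I'" unfolding rm[of w] by simp
    have "real (card I) * Gm D (sum w I / real (card I))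
        = (2 + real (card I')) * Gm D ((2 * ((w i0 + w j0) / 2) + real (card I') * (sum w I' / real (card I'))) / (2 + real (card I')))"
      unfolding cI[symmetric] mean_mul[OF finI'] sI by simp
    also have "\<dots> \<le> 2 * Gm D ((w i0 + w j0) / 2) + real (card I') * Gm D (sum w I' / real (card I'))"
      by (rule Gm_combine[OF D2]) auto
    also have "\<dots> \<le> (Hf D (w i0) (w j0) + Hf D (w j0) (w i0)) + (\<Sum>i\<in>I'. Hf D (w i) (w (\<sigma>2 i)))"
      using IH[OF sub bI'] pair_ineq[OF D2, of "w i0" "w j0"] by simp
    also have "\<dots> \<le> (\<Sum>i\<in>I. Hf D (w i) (w (\<sigma> i)))" using sH s2le s1le by simp
    finally show ?thesis .
  qed
qed

lemma rearr:
  fixes w :: "'a \<Rightarrow> real" and \<sigma> :: "'a \<Rightarrow> 'a"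
  assumes D2: "D \<ge> 2"
  shows "finite I \<Longrightarrow> bij_betw \<sigma> I I \<Longrightarrow>
    real (card I) * Gm D (sum w I / real (card I)) \<le> (\<Sum>i\<in>I. Hf D (w i) (w (\<sigma> i)))"
proof (induction "card I" arbitrary: I \<sigma> rule: less_induct)
  case (less I \<sigma>)
  show ?case
  proof (cases "I = {}")
    case True then show ?thesis by simp
  next
    case False
    show ?thesis
    proof (rule rearr_step[OF D2 less.prems False])
      fix J \<tau> assume J: "J \<subset> I" "bij_betw \<tau> (J::'a set) J"
      have "card J < card I" using psubset_card_mono[OF less.prems(1) J(1)] .
      moreover have "finite J" using J(1) less.prems(1) finite_subset by auto
      ultimately show "real (card J) * Gm D (sum w J / real (card J)) \<le> (\<Sum>i\<in>J. Hf D (w i) (w (\<tau> i)))"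
        using less.hyps J(2) by blast
    qed
  qed
qed

lemma Gm_Ups:
  assumes D2: "D \<ge> 2"
  shows "Gm D (-s) = exp (-s) * (Upsilon (2 * s) + (real D - 1) * Upsilon (- (2 * s / (real D - 1))))"
proof -
  define n where "n = real D - 1"
  have n: "n > 0" using D2 by (simp add: n_def)
  have Dn: "real D = n + 1" by (simp add: n_def)
  have e1: "exp (-s) * exp (2 * s) = exp s" by (simp add: exp_add[symmetric])
  have "-s + - (2 * s / n) = kk D * (-s)" using n Dn by (simp add: kk_def n_def[symmetric] field_simps)
  then have e2: "exp (-s) * exp (- (2 * s / n)) = exp (kk D * (-s))" by (simp add: exp_add[symmetric])
  have "exp (-s) * (Upsilon (2 * s) + n * Upsilon (- (2 * s / n)))
      = exp (-s) * exp (2 * s) + n * (exp (-s) * exp (- (2 * s / n))) - exp (-s) * (1 + n) + exp (-s) * (n * (2 * s / n) - 2 * s)"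
    unfolding Upsilon_def by (simp add: algebra_simps)
  also have "n * (2 * s / n) - 2 * s = 0" using n by simp
  finally have "exp (-s) * (Upsilon (2 * s) + n * Upsilon (- (2 * s / n))) = exp s + n * exp (kk D * (-s)) - real D * exp (-s)"
    unfolding e1 e2 Dn by (simp add: algebra_simps)
  then show ?thesis using Gm_alt[OF D2] by (simp add: n_def)
qed

lemma F_eq:
  assumes D2: "D \<ge> 2" and mu: "\<mu>0 > 0"
  shows "F_flat D \<mu>0 a = (real D / \<mu>0^2) * Gm D (- (\<mu>0 / real D) * a)"
proof -
  define s where "s = \<mu>0 / real D * a"
  have 1: "2 * \<mu>0 / real D * a = 2 * s" by (simp add: s_def)
  have "(2 * \<mu>0 / (real D * (real D - 1))) * a = 2 * s / (real D - 1)" by (simp add: s_def)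
  then have 2: "- (2 * \<mu>0 / (real D * (real D - 1))) * a = - (2 * s / (real D - 1))" by simp
  have 3: "- (\<mu>0 / real D) * a = - s" by (simp add: s_def)
  show ?thesis unfolding F_flat_def 1 2 3 Gm_Ups[OF D2] by (simp add: algebra_simps)
qed

lemma Gm_lower:
  assumes D2: "D \<ge> 2" and s: "s \<ge> 0"
  shows "Gm D (-s) \<ge> s^2 / 2"
proof -
  define n where "n = real D - 1"
  have n: "n > 0" using D2 by (simp add: n_def)
  have U: "\<And>z. Upsilon z \<ge> 0" unfolding Upsilon_def using exp_ge_add_one_self by (simp add: algebra_simps)
  have "Gm D (-s) \<ge> exp (-s) * Upsilon (2 * s)"
    unfolding Gm_Ups[OF D2] n_def[symmetric] using U[of "- (2 * s / n)"] n
    by (intro mult_left_mono) auto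
  moreover have "exp (-s) * Upsilon (2 * s) = exp s - (1 + 2 * s) / exp s"
    unfolding Upsilon_def by (simp add: exp_minus field_simps exp_add[symmetric] mult_2)
  moreover have "exp s - (1 + 2 * s) / exp s \<ge> s^2 / 2"
  proof -
    define q0 where "q0 = 1 + s + s^2 / 2"
    have h: "0 \<le> s^2 / 2" by simp
    have q0: "q0 > 0" "q0 \<le> exp s" using s exp_lower_Taylor_quadratic[OF s] h unfolding q0_def by linarith+
    have "(1 + 2 * s) / exp s \<le> (1 + 2 * s) / q0" using q0 s by (intro divide_left_mono) auto
    moreover have "q0 - (1 + 2 * s) / q0 - s^2 / 2 = (3/2 * s^2 + s^3 / 2) / q0"
      using q0 by (simp add: q0_def field_simps power2_eq_square power3_eq_cube)
    moreover have "(3/2 * s^2 + s^3 / 2) / q0 \<ge> 0" using s q0 by simp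
    ultimately show ?thesis using q0 by linarith
  qed
  ultimately show ?thesis by linarith
qed

lemma F_props:
  assumes D2: "D \<ge> 2" and mu: "\<mu>0 > 0"
  shows "strictly_convex_on {0..} (F_flat D \<mu>0)" and "CD_function (F_flat D \<mu>0)"
proof -
  define F where "F = F_flat D \<mu>0"
  have Feq: "F = (\<lambda>a. (real D / \<mu>0^2) * Gm D (- (\<mu>0 / real D) * a))"
    using F_eq[OF D2 mu] by (auto simp: F_def)
  have sc: "strictly_convex_on S F" for S
    unfolding Feq using D2 mu
    by (intro strict_convex_affine Gm_strict_convex) auto
  then show "strictly_convex_on {0..} (F_flat D \<mu>0)" by (simp add: F_def)
  have F0: "F 0 = 0" unfolding Feq using Gm_zero[OF D2] by simp
  have Fnn: "F x \<ge> 0" for x unfolding Feq using Gm_nonneg[OF D2] by simp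
  have cont: "continuous_on UNIV F" unfolding F_def F_flat_def Upsilon_def
    by (intro continuous_intros)
  have mono: "strict_mono_on {0<..} (\<lambda>x. F x / x)"
  proof (rule strict_mono_onI)
    fix x y :: real assume "x \<in> {0<..}" "y \<in> {0<..}" "x < y"
    then have x: "x > 0" and y: "y > 0" and xy: "x < y" by auto
    define t where "t = x / y"
    have t: "0 < t" "t < 1" using x y xy by (auto simp: t_def)
    have "F ((1 - t) * 0 + t * y) < (1 - t) * F 0 + t * F y"
      using sc[of UNIV] t y unfolding strictly_convex_on_def by (metis UNIV_I order_less_irrefl)
    moreover have "(1 - t) * 0 + t * y = x" using y by (simp add: t_def)
    ultimately have "F x < x / y * F y" using F0 by (simp add: t_def)
    then have "F x < F y / y * x" by (metis mult.commute times_divide_eq_left)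
    then show "F x / x < F y / y" using x by (simp add: pos_divide_less_eq)
  qed
  have low: "F r \<ge> r^2 / (2 * real D)" if "r \<ge> 0" for r
  proof -
    have "Gm D (- (\<mu>0 / real D * r)) \<ge> (\<mu>0 / real D * r)^2 / 2"
      using Gm_lower[OF D2, of "\<mu>0 / real D * r"] that mu by simp
    then have "(real D / \<mu>0^2) * Gm D (- (\<mu>0 / real D * r)) \<ge> (real D / \<mu>0^2) * ((\<mu>0 / real D * r)^2 / 2)"
      using mu D2 by (intro mult_left_mono) auto
    moreover have "(real D / \<mu>0^2) * ((\<mu>0 / real D * r)^2 / 2) = r^2 / (2 * real D)"
      using mu D2 by (simp add: field_simps power2_eq_square)
    ultimately show ?thesis unfolding Feq by simp
  qed
  have integ: "(\<lambda>r. 1 / F r) integrable_on {1..}"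
  proof (rule measurable_bounded_by_integrable_imp_integrable_real)
    have pos: "F r > 0" if "r \<in> {1..}" for r
    proof -
      have "r^2 / (2 * real D) > 0" using that D2 by simp
      then show ?thesis using low[of r] that by simp
    qed
    have "continuous_on {1..} (\<lambda>r. 1 / F r)"
      using pos by (intro continuous_intros continuous_on_subset[OF cont]) force+
    then show "(\<lambda>r. 1 / F r) \<in> borel_measurable (lebesgue_on {1..})"
      by (rule continuous_imp_measurable_on_sets_lebesgue) simp
    have "((\<lambda>x::real. 1 / x ^ 2) has_integral 1 / (real (2 - 1) * 1 ^ (2 - 1))) {1..}"
      by (rule has_integral_inverse_power_to_inf) auto
    then have "(\<lambda>x::real. 1 / x ^ 2) integrable_on {1..}" by blast
    then show "(\<lambda>r. (2 * real D) * (1 / r ^ 2)) integrable_on {1..}"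
      using integrable_on_cmult_left[of "\<lambda>x::real. 1 / x ^ 2" "{1..}" "2 * real D"] by simp
    show "{1::real..} \<in> sets lebesgue" by simp
    fix r :: real assume r: "r \<in> {1..}"
    have "r^2 / (2 * real D) > 0" using r D2 by simp
    moreover have "0 < F r * (r^2 / (2 * real D))" using pos[OF r] \<open>r^2 / (2 * real D) > 0\<close> by (rule mult_pos_pos)
    ultimately have "1 / F r \<le> 1 / (r^2 / (2 * real D))"
      using low[of r] r by (intro divide_left_mono) auto
    then show "\<bar>1 / F r\<bar> \<le> (2 * real D) * (1 / r ^ 2)" using pos[OF r] by simp
  qed
  show "CD_function (F_flat D \<mu>0)"
    unfolding CD_function_def F_def[symmetric]
    using continuous_on_subset[OF cont] Fnn F0 mono integ by auto
qed



lemma exp_jensen: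
  fixes y :: "'a \<Rightarrow> real"
  assumes "finite J" "J \<noteq> {}"
  shows "real (card J) * exp (sum y J / real (card J)) \<le> (\<Sum>j\<in>J. exp (y j))"
proof -
  define m where "m = sum y J / real (card J)"
  have c: "real (card J) > 0" using assms by (simp add: card_gt_0_iff)
  have "\<And>j. exp m * (1 + (y j - m)) \<le> exp (y j)"
  proof -
    fix j
    have "exp m * (1 + (y j - m)) \<le> exp m * exp (y j - m)"
      by (intro mult_left_mono exp_ge_add_one_self) auto
    also have "\<dots> = exp (y j)" by (simp add: exp_add[symmetric])
    finally show "exp m * (1 + (y j - m)) \<le> exp (y j)" .
  qed
  then have "(\<Sum>j\<in>J. exp m * (1 + (y j - m))) \<le> (\<Sum>j\<in>J. exp (y j))" by (rule sum_mono)
  moreover have "(\<Sum>j\<in>J. exp m * (1 + (y j - m))) = exp m * (real (card J) + sum y J - real (card J) * m)"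
    by (simp add: sum_distrib_left[symmetric] sum.distrib sum_subtractf)
  moreover have "real (card J) * m = sum y J" using c by (simp add: m_def)
  ultimately show ?thesis by (simp add: m_def algebra_simps)
qed

lemma nbhd_struct:
  assumes reg: "regular E D"
    and e1: "\<forall>i<D. \<forall>y\<in>closed_nbhd E x. E y (eta i y)"
    and e2: "\<forall>y\<in>closed_nbhd E x. \<forall>i<D. \<forall>j<D. i \<noteq> j \<longrightarrow> eta i y \<noteq> eta j y"
    and y: "y \<in> closed_nbhd E x"
  shows "nbrs E y = (\<lambda>i. eta i y) ` {..<D}" and "inj_on (\<lambda>i. eta i y) {..<D}"
proof -
  show inj: "inj_on (\<lambda>i. eta i y) {..<D}" using e2 y by (auto simp: inj_on_def)
  have sub: "(\<lambda>i. eta i y) ` {..<D} \<subseteq> nbrs E y" using e1 y by (auto simp: nbrs_def)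
  have fin: "finite (nbrs E y)" "card (nbrs E y) = D" using reg by (auto simp: regular_def)
  have "card ((\<lambda>i. eta i y) ` {..<D}) = D" using card_image[OF inj] by simp
  then show "nbrs E y = (\<lambda>i. eta i y) ` {..<D}" using card_subset_eq[OF fin(1) sub] fin(2) by simp
qed

lemma graph_main:
  fixes E :: "'a \<Rightarrow> 'a \<Rightarrow> bool" and v :: "'a \<Rightarrow> real"
  assumes sg: "simple_graph E" and reg: "regular E D" and rf: "ricci_flat E D" and D2: "D \<ge> 2"
    and mu0: "\<mu>0 > 0" and mu: "\<forall>y. \<mu> y = \<mu>0"
    and maxc: "\<forall>y. E x y \<longrightarrow> Lop E \<mu> v y \<le> Lop E \<mu> v x"
  shows "F_flat D \<mu>0 (Lop E \<mu> v x) \<le> laplacian E \<mu> (Psi E \<mu> Upsilon' v) x"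
proof -
  from rf obtain eta :: "nat \<Rightarrow> 'a \<Rightarrow> 'a" where
    e1: "\<forall>i<D. \<forall>y\<in>closed_nbhd E x. E y (eta i y)" and
    e2: "\<forall>y\<in>closed_nbhd E x. \<forall>i<D. \<forall>j<D. i \<noteq> j \<longrightarrow> eta i y \<noteq> eta j y" and
    e3: "\<forall>i<D. image_mset (\<lambda>j. eta i (eta j x)) (mset_set {..<D})
                = image_mset (\<lambda>j. eta j (eta i x)) (mset_set {..<D})"
    unfolding ricci_flat_def ricci_flat_at_def by blast
  note NB = nbhd_struct[OF reg e1 e2]
  have sumN: "sum f (nbrs E y) = (\<Sum>i<D. f (eta i y))" if "y \<in> closed_nbhd E x" for y and f :: "'a \<Rightarrow> real"
    using NB(1)[OF that] sum.reindex[OF NB(2)[OF that], of f] by simp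
  have finN: "finite (nbrs E y)" "card (nbrs E y) = D" for y using reg by (auto simp: regular_def)
  have xN: "x \<in> closed_nbhd E x" by (simp add: closed_nbhd_def)
  define X where "X j = eta j x" for j
  have EX: "E x (X j)" if "j < D" for j using e1 xN that by (simp add: X_def)
  have XN: "X j \<in> closed_nbhd E x" if "j < D" for j using EX[OF that] by (simp add: closed_nbhd_def nbrs_def)
  have symE: "\<And>p q. E p q \<Longrightarrow> E q p" using sg by (simp add: simple_graph_def)
  define a where "a = Lop E \<mu> v x"
  define w where "w j = v (X j) - v x" for j
  have LopY: "Lop E \<mu> v y = - ((1 / \<mu>0) * (\<Sum>z\<in>nbrs E y. v z - v y))" for y
    using mu by (simp add: Lop_def laplacian_def)
  have sumw: "(\<Sum>j<D. w j) = - \<mu>0 * a"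
  proof -
    have "a = - ((1 / \<mu>0) * (\<Sum>j<D. w j))" unfolding a_def LopY sumN[OF xN] w_def X_def ..
    then show ?thesis using mu0 by (simp add: field_simps)
  qed
  have mseq: "image_mset (\<lambda>j. eta i (X j)) (mset_set {..<D}) = mset_set (nbrs E (X i))" if "i < D" for i
  proof -
    have "image_mset (\<lambda>j. eta i (X j)) (mset_set {..<D}) = image_mset (\<lambda>j. eta j (X i)) (mset_set {..<D})"
      using e3 that by (simp add: X_def)
    also have "\<dots> = mset_set ((\<lambda>j. eta j (X i)) ` {..<D})"
      by (rule image_mset_mset_set[OF NB(2)[OF XN[OF that]]])
    also have "\<dots> = mset_set (nbrs E (X i))" using NB(1)[OF XN[OF that]] by simp
    finally show ?thesis .
  qed
  have sumM: "(\<Sum>j<D. f (eta i (X j))) = sum f (nbrs E (X i))" if "i < D" for i and f :: "'a \<Rightarrow> real"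
  proof -
    have "(\<Sum>j<D. f (eta i (X j))) = sum_mset (image_mset (\<lambda>j. f (eta i (X j))) (mset_set {..<D}))"
      by (rule sum_unfold_sum_mset)
    also have "image_mset (\<lambda>j. f (eta i (X j))) (mset_set {..<D}) = image_mset f (image_mset (\<lambda>j. eta i (X j)) (mset_set {..<D}))"
      by (simp add: image_mset.compositionality comp_def)
    also have "\<dots> = image_mset f (mset_set (nbrs E (X i)))" using mseq[OF that] by simp
    also have "sum_mset \<dots> = sum f (nbrs E (X i))" by (rule sum_unfold_sum_mset[symmetric])
    finally show ?thesis .
  qed
  have exs: "\<exists>j. j < D \<and> eta i (X j) = x" if "i < D" for i
  proof -
    have "x \<in> nbrs E (X i)" using symE[OF EX[OF that]] by (simp add: nbrs_def)
    then have "x \<in># mset_set (nbrs E (X i))" using finN by simp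
    then have "x \<in># image_mset (\<lambda>j. eta i (X j)) (mset_set {..<D})" using mseq[OF that] by simp
    then show ?thesis by auto
  qed
  define \<sigma> where "\<sigma> i = (SOME j. j < D \<and> eta i (X j) = x)" for i
  have \<sigma>: "\<sigma> i < D" "eta i (X (\<sigma> i)) = x" if "i < D" for i
    using someI_ex[OF exs[OF that]] by (auto simp: \<sigma>_def)
  have bij\<sigma>: "bij_betw \<sigma> {..<D} {..<D}"
  proof -
    have inj: "inj_on \<sigma> {..<D}"
    proof (rule inj_onI)
      fix i i' assume "i \<in> {..<D}" "i' \<in> {..<D}" and eq: "\<sigma> i = \<sigma> i'"
      then have i: "i < D" "i' < D" by auto
      have "eta i (X (\<sigma> i)) = eta i' (X (\<sigma> i))" using \<sigma>(2)[OF i(1)] \<sigma>(2)[OF i(2)] eq by simp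
      then show "i = i'" using e2 XN[OF \<sigma>(1)[OF i(1)]] i by blast
    qed
    have sub: "\<sigma> ` {..<D} \<subseteq> {..<D}" using \<sigma>(1) by auto
    have "card (\<sigma> ` {..<D}) = card {..<D}" using card_image[OF inj] by simp
    then have "\<sigma> ` {..<D} = {..<D}" using card_subset_eq[OF _ sub] by simp
    then show ?thesis using inj by (simp add: bij_betw_def)
  qed
  have row: "Hf D (w i) (w (\<sigma> i)) + real D * exp (w i) \<le> (\<Sum>j<D. exp (v (eta i (X j)) - v (X j)))"
    if i: "i < D" for i
  proof -
    define y where "y j = v (eta i (X j)) - v (X j)" for j
    define J where "J = {..<D} - {\<sigma> i}"
    have finJ: "finite J" by (simp add: J_def)
    have cJ: "real (card J) = real D - 1" using \<sigma>(1)[OF i] D2 by (simp add: J_def of_nat_diff)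
    have Jne: "J \<noteq> {}" using cJ D2 by auto
    have ysig: "y (\<sigma> i) = - w (\<sigma> i)" using \<sigma>(2)[OF i] by (simp add: y_def w_def)
    have split: "(\<Sum>j<D. exp (y j)) = exp (y (\<sigma> i)) + (\<Sum>j\<in>J. exp (y j))"
      using sum.remove[of "{..<D}" "\<sigma> i" "\<lambda>j. exp (y j)"] \<sigma>(1)[OF i] by (simp add: J_def)
    have splity: "(\<Sum>j<D. y j) = y (\<sigma> i) + sum y J"
      using sum.remove[of "{..<D}" "\<sigma> i" y] \<sigma>(1)[OF i] by (simp add: J_def)
    have "Lop E \<mu> v (X i) \<le> a" using maxc EX[OF i] by (simp add: a_def)
    then have "- ((1 / \<mu>0) * (\<Sum>z\<in>nbrs E (X i). v z - v (X i))) \<le> a" unfolding LopY .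
    then have c1: "(\<Sum>z\<in>nbrs E (X i). v z - v (X i)) \<ge> - \<mu>0 * a" using mu0 by (simp add: field_simps)
    have s1: "(\<Sum>j<D. v (eta i (X j))) = (\<Sum>z\<in>nbrs E (X i). v z - v (X i)) + real D * v (X i)"
      unfolding sumM[OF i] by (simp add: sum_subtractf finN)
    have s2: "(\<Sum>j<D. v (X j)) = (\<Sum>j<D. w j) + real D * v x"
      by (simp add: w_def sum_subtractf)
    have "(\<Sum>j<D. y j) = (\<Sum>j<D. v (eta i (X j))) - (\<Sum>j<D. v (X j))"
      by (simp add: y_def sum_subtractf)
    also have "\<dots> \<ge> real D * w i" unfolding s1 s2 sumw using c1 by (simp add: w_def algebra_simps)
    finally have sy: "sum y J \<ge> real D * w i + w (\<sigma> i)" using splity ysig by simp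
    have n: "real D - 1 > 0" using D2 by simp
    have "(real D * w i + w (\<sigma> i)) / (real D - 1) \<le> sum y J / (real D - 1)"
      using sy n by (intro divide_right_mono) auto
    then have "(real D - 1) * exp ((real D * w i + w (\<sigma> i)) / (real D - 1)) \<le> (real D - 1) * exp (sum y J / real (card J))"
      using n cJ by (intro mult_left_mono) auto
    also have "\<dots> \<le> (\<Sum>j\<in>J. exp (y j))" using exp_jensen[OF finJ Jne, of y] cJ by simp
    finally have "(real D - 1) * exp ((real D * w i + w (\<sigma> i)) / (real D - 1)) \<le> (\<Sum>j\<in>J. exp (y j))" .
    then have "Hf D (w i) (w (\<sigma> i)) + real D * exp (w i) \<le> (\<Sum>j<D. exp (y j))"
      unfolding split ysig Hf_def by simp
    then show ?thesis by (simp add: y_def)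
  qed
  have PsiY: "Psi E \<mu> Upsilon' v y = (1 / \<mu>0) * ((\<Sum>i<D. exp (v (eta i y) - v y)) - real D)"
    if "y \<in> closed_nbhd E x" for y
    using mu unfolding Psi_def Upsilon'_def sumN[OF that] by (simp add: sum_subtractf)
  define R where "R j = (\<Sum>i<D. exp (v (eta i (X j)) - v (X j)))" for j
  have Px: "Psi E \<mu> Upsilon' v x = (1 / \<mu>0) * ((\<Sum>j<D. exp (w j)) - real D)"
    unfolding PsiY[OF xN] by (simp add: w_def X_def)
  have PX: "Psi E \<mu> Upsilon' v (X j) = (1 / \<mu>0) * (R j - real D)" if "j < D" for j
    unfolding PsiY[OF XN[OF that]] R_def ..
  have LHS: "laplacian E \<mu> (Psi E \<mu> Upsilon' v) x = (1 / \<mu>0^2) * ((\<Sum>j<D. R j) - real D * (\<Sum>j<D. exp (w j)))"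
  proof -
    have "laplacian E \<mu> (Psi E \<mu> Upsilon' v) x = (1 / \<mu>0) * (\<Sum>j<D. Psi E \<mu> Upsilon' v (X j) - Psi E \<mu> Upsilon' v x)"
      using mu unfolding laplacian_def sumN[OF xN] by (simp add: X_def)
    also have "(\<Sum>j<D. Psi E \<mu> Upsilon' v (X j) - Psi E \<mu> Upsilon' v x) = (\<Sum>j<D. (1 / \<mu>0) * (R j - real D) - Psi E \<mu> Upsilon' v x)"
      by (rule sum.cong) (auto simp: PX)
    also have "\<dots> = (1 / \<mu>0) * ((\<Sum>j<D. R j) - real D * (\<Sum>j<D. exp (w j)))"
      unfolding Px by (simp add: sum_subtractf sum_distrib_left[symmetric] sum_divide_distrib[symmetric] algebra_simps)
    finally show ?thesis by (simp add: power2_eq_square)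
  qed
  have SR: "(\<Sum>j<D. R j) = (\<Sum>i<D. (\<Sum>j<D. exp (v (eta i (X j)) - v (X j))))"
    unfolding R_def by (rule sum.swap)
  have "(\<Sum>i<D. Hf D (w i) (w (\<sigma> i))) + real D * (\<Sum>j<D. exp (w j)) \<le> (\<Sum>j<D. R j)"
    unfolding SR sum_distrib_left sum.distrib[symmetric] by (rule sum_mono) (use row in auto)
  then have main: "(\<Sum>i<D. Hf D (w i) (w (\<sigma> i))) \<le> (\<Sum>j<D. R j) - real D * (\<Sum>j<D. exp (w j))" by simp
  have "real (card {..<D}) * Gm D (sum w {..<D} / real (card {..<D})) \<le> (\<Sum>i<D. Hf D (w i) (w (\<sigma> i)))"
    by (rule rearr[OF D2 _ bij\<sigma>]) simp
  then have G1: "real D * Gm D (- (\<mu>0 / real D) * a) \<le> (\<Sum>i<D. Hf D (w i) (w (\<sigma> i)))"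
    using sumw by simp
  have "F_flat D \<mu>0 a = (1 / \<mu>0^2) * (real D * Gm D (- (\<mu>0 / real D) * a))"
    unfolding F_eq[OF D2 mu0] by simp
  also have "\<dots> \<le> (1 / \<mu>0^2) * ((\<Sum>j<D. R j) - real D * (\<Sum>j<D. exp (w j)))"
    using G1 main mu0 by (intro mult_left_mono) auto
  finally show ?thesis unfolding LHS a_def .
qed


theorem theorem3p11:
  fixes E :: "'a \<Rightarrow> 'a \<Rightarrow> bool" and D :: nat and \<mu> :: "'a \<Rightarrow> real" and \<mu>0 :: real
  assumes "simple_graph E" and "regular E D" and "ricci_flat E D" and "D \<ge> 2"
    and "\<mu>0 > 0" and "\<forall>y. \<mu> y = \<mu>0"
  shows "strictly_convex_on {0..} (F_flat D \<mu>0) \<and> CD_F0 E \<mu> (F_flat D \<mu>0)"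
proof -
  have 1: "strictly_convex_on {0..} (F_flat D \<mu>0)" and 2: "CD_function (F_flat D \<mu>0)"
    using F_props[OF assms(4,5)] by blast+
  have 3: "F_flat D \<mu>0 (Lop E \<mu> v x) \<le> laplacian E \<mu> (Psi E \<mu> Upsilon' v) x"
    if "\<forall>y. E x y \<longrightarrow> Lop E \<mu> v x \<ge> Lop E \<mu> v y" for x v
    using graph_main[OF assms] that by blast
  show ?thesis using 1 2 3 unfolding CD_F0_def by blast
qed

end
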